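(* Let $k\geq 2$ and $n\geq k$ be integers. Then in $\mathcal{H}$, $$ \sum_{\substack{r, s_i\geq 1\\ r+s_1+\cdots +s_{k-1}=n}} z_{r}\,\tilde{\sqcup}\, z_{s_1,\dots, s_{k-1}} = \sum_{\substack{t_i\geq 1\\ t_1+\cdots+t_{k}=n}} C(t_1,\dots, t_{k-1})\, z_{t_1,\dots, t_{k}}. $$
   Context: Let $\mathcal{H}$ be the free $\mathbb{Z}$-module on words in letters $z_s$ ($s\geq1$), with $z_{s_1,\dots,s_k}:=z_{s_1}\cdots z_{s_k}$ and $1$ the empty word. Let $\mathbb{Z}\langle x_0,x_1\rangle$ be the free $\mathbb{Z}$-module on words in two letters $x_0,x_1$, with the shuffle product $\sqcup$ defined bilinearly and recursively by $1\sqcup u=u\sqcup 1=u$ and $(au)\sqcup(bv)=a(u\sqcup (bv))+b((au)\sqcup v)$ for letters $a,b\in\{x_0,x_1\}$ and words $u,v$. Let $\rho$ be the $\mathbb{Z}$-linear bijection from $\mathbb{Z}\oplus \mathbb{Z}\langle x_0,x_1\rangle x_1$ (span of $1$ and words ending in $x_1$) onto $\mathcal{H}$ given by $\rho(1)=1$ and $\rho(x_0^{s_1-1}x_1\cdots x_0^{s_k-1}x_1)=z_{s_1,\dots,s_k}$. Define the product $\tilde{\sqcup}$ on $\mathcal{H}$ by $w_1\,\tilde{\sqcup}\,w_2=\rho\big(\rho^{-1}(w_1)\sqcup\rho^{-1}(w_2)\big)$. For positive integers $t_1,\dots,t_{k-1}$ ($k\geq 2$) with $T_j=t_1+\cdots+t_j$,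 set $C(t_1,\dots,t_{k-1})=\sum_{j=1}^{k-1}2^{T_j-j}+2^{T_{k-1}-(k-1)}$ (so for $k=2$, $C(t_1)=2^{t_1}$). *)

theory Defs
  imports Main
begin

datatype letter = X0 | X1

text \<open>Shuffle of two words, as the list of resulting words counted with multiplicity.\<close>
fun shuffle :: "'a list \<Rightarrow> 'a list \<Rightarrow> 'a list list" where
  "shuffle [] v = [v]"
| "shuffle u [] = [u]"
| "shuffle (a # u) (b # v) =
     map ((#) a) (shuffle u (b # v)) @ map ((#) b) (shuffle (a # u) v)"

text \<open>Elements of a free Z-module on a set of words are represented by their
  coefficient functions. Words of H are lists of positive naturals.\<close>
definition is_hword :: "nat list \<Rightarrow> bool" where
  "is_hword c \<longleftrightarrow> (\<forall>s\<in>set c. 1 \<le> s)"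

definition rho_inv :: "nat list \<Rightarrow> letter list" where
  "rho_inv ss = concat (map (\<lambda>s. replicate (s - 1) X0 @ [X1]) ss)"

definition shuffle_prod :: "'a list \<Rightarrow> 'a list \<Rightarrow> 'a list \<Rightarrow> int" where
  "shuffle_prod u v = (\<lambda>w. int (count_list (shuffle u v) w))"

text \<open>w1 ~sh w2 = rho(rho_inv w1 sh rho_inv w2), as an element of H
  (coefficient function on H-words; rho is a bijection onto the H-words).\<close>
definition hshuffle :: "nat list \<Rightarrow> nat list \<Rightarrow> nat list \<Rightarrow> int" where
  "hshuffle a b = (\<lambda>c. if is_hword c then shuffle_prod (rho_inv a) (rho_inv b) (rho_inv c) else 0)"

definition hbasis :: "nat list \<Rightarrow> nat list \<Rightarrow> int" where
  "hbasis t = (\<lambda>c. if c = t then 1 else 0)"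

definition Ccoef :: "nat list \<Rightarrow> int" where
  "Ccoef ts = (\<Sum>j=1..length ts. 2 ^ (sum_list (take j ts) - j)) + 2 ^ (sum_list ts - length ts)"

definition comps :: "nat \<Rightarrow> nat \<Rightarrow> nat list set" where
  "comps n m = {ts. length ts = m \<and> (\<forall>t\<in>set ts. 1 \<le> t) \<and> sum_list ts = n}"

end

theory Submission
  imports Defs
begin

lemma shuffle_nil2[simp]: "shuffle u [] = [u]"
  by (cases u) auto

lemma shuffle_len_count:
  "w \<in> set (shuffle u v) \<Longrightarrow> length w = length u + length v \<and> count_list w x = count_list u x + count_list v x"
  by (induction u v arbitrary: w rule: shuffle.induct) auto

lemma count_shuffle_zero:
  "length w \<noteq> length u + length v \<or> count_list w x \<noteq> count_list u x + count_list v x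
   \<Longrightarrow> count_list (shuffle u v) w = 0"
  using shuffle_len_count count_list_0_iff by metis

lemma count_map_cons: "count_list (map ((#) a) xs) (x#w) = (if x = a then count_list xs w else 0)"
  by (induction xs) auto

lemma count_shuffle_cons:
  "count_list (shuffle (a#u) (b#v)) (x#w) =
     (if x = a then count_list (shuffle u (b#v)) w else 0) + (if x = b then count_list (shuffle (a#u) v) w else 0)"
  by (simp add: count_map_cons)

definition VB :: "nat \<Rightarrow> letter list set" where
  "VB m = {v. length v \<le> m \<and> (v \<noteq> [] \<longrightarrow> last v = X1)}"

lemma letter_UNIV: "(UNIV :: letter set) = {X0, X1}"
  using letter.exhaust by auto

lemma finite_VB[simp]: "finite (VB m)"
proof -
  have "VB m \<subseteq> {xs. set xs \<subseteq> UNIV \<and> length xs \<le> m}" unfolding VB_def by auto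
  moreover have "finite {xs. set xs \<subseteq> (UNIV::letter set) \<and> length xs \<le> m}"
    by (rule finite_lists_length_le) (simp add: letter_UNIV)
  ultimately show ?thesis by (rule finite_subset)
qed

lemma VB_Suc: "VB (Suc m) = insert [] ((#) X1 ` VB m \<union> (#) X0 ` (VB m - {[]}))"
  unfolding VB_def
  apply (rule set_eqI)
  subgoal for v by (cases v) (auto intro: letter.exhaust simp: image_iff)
  done

lemma sum_VB_Suc:
  fixes f :: "letter list \<Rightarrow> int"
  shows "sum f (VB (Suc m)) = f [] + sum (\<lambda>v. f (X1#v)) (VB m) + sum (\<lambda>v. f (X0#v)) (VB m - {[]})"
proof -
  have d: "(#) X1 ` VB m \<inter> (#) X0 ` (VB m - {[]}) = {}" by auto
  have "sum f (VB (Suc m)) = f [] + sum f ((#) X1 ` VB m \<union> (#) X0 ` (VB m - {[]}))"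
    unfolding VB_Suc by (subst sum.insert) auto
  also have "\<dots> = f [] + (sum f ((#) X1 ` VB m) + sum f ((#) X0 ` (VB m - {[]})))"
    using d by (subst sum.union_disjoint) auto
  also have "sum f ((#) X1 ` VB m) = sum (\<lambda>v. f (X1#v)) (VB m)"
    by (subst sum.reindex) (auto simp: inj_on_def)
  also have "sum f ((#) X0 ` (VB m - {[]})) = sum (\<lambda>v. f (X0#v)) (VB m - {[]})"
    by (subst sum.reindex) (auto simp: inj_on_def)
  finally show ?thesis by simp
qed

definition G :: "letter list \<Rightarrow> letter list \<Rightarrow> int" where
  "G a w = (\<Sum>v\<in>VB (length w). int (count_list (shuffle a v) w))"

lemma G_long: "length a > length w \<Longrightarrow> G a w = 0"
  unfolding G_def by (rule sum.neutral) (auto intro!: count_shuffle_zero)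

lemma G_nil: "G [] w = (if w = [] \<or> last w = X1 then 1 else 0)"
proof -
  have "G [] w = (\<Sum>v\<in>VB (length w). if w = v then 1 else 0)"
    unfolding G_def by (intro sum.cong) auto
  also have "\<dots> = (if w \<in> VB (length w) then 1 else 0)" by (simp add: sum.delta)
  finally show ?thesis by (auto simp: VB_def)
qed

lemma G_bigger:
  "G a w = (\<Sum>v\<in>VB (Suc (length w)). int (count_list (shuffle a v) w))"
  unfolding G_def
  apply (rule sum.mono_neutral_left)
    apply simp
  by (auto simp: VB_def intro!: count_shuffle_zero)

lemma G_cons:
  "G (a0#a') (x#w) = (if a0#a' = x#w then 1 else 0)
     + (if x = a0 then G a' w - (if a' = w then 1 else 0) else 0)
     + G (a0#a') w - (if x = X0 \<and> a0#a' = w then 1 else 0)"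
proof -
  define m where "m = length w"
  define g where "g v = int (count_list (shuffle a' v) w)" for v
  define h where "h v = int (count_list (shuffle (a0#a') v) w)" for v
  have f: "int (count_list (shuffle (a0#a') (b#v)) (x#w)) =
       (if x = a0 then g (b#v) else 0) + (if x = b then h v else 0)" for b v
    unfolding count_shuffle_cons g_def h_def by simp
  have "G (a0#a') (x#w) = (\<Sum>v\<in>VB (Suc m). int (count_list (shuffle (a0#a') v) (x#w)))"
    by (simp add: G_def m_def)
  also have "\<dots> = (if a0#a' = x#w then 1 else 0)
     + (\<Sum>v\<in>VB m. (if x = a0 then g (X1#v) else 0) + (if x = X1 then h v else 0))
     + (\<Sum>v\<in>VB m - {[]}. (if x = a0 then g (X0#v) else 0) + (if x = X0 then h v else 0))"
  proof -
    have e: "int (count_list (shuffle (a0#a') []) (x#w)) = (if a0#a' = x#w then 1 else 0)" by simp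
    show ?thesis by (simp only: sum_VB_Suc f e)
  qed
  also have "\<dots> = (if a0#a' = x#w then 1 else 0)
     + (if x = a0 then (\<Sum>v\<in>VB m. g (X1#v)) + (\<Sum>v\<in>VB m - {[]}. g (X0#v)) else 0)
     + ((if x = X1 then (\<Sum>v\<in>VB m. h v) else 0) + (if x = X0 then (\<Sum>v\<in>VB m - {[]}. h v) else 0))"
    by (simp add: sum.distrib if_distrib cong: if_cong)
  also have "(\<Sum>v\<in>VB m. g (X1#v)) + (\<Sum>v\<in>VB m - {[]}. g (X0#v)) = G a' w - g []"
    using sum_VB_Suc[of g m] G_bigger[of a' w] by (simp add: g_def m_def)
  also have "(\<Sum>v\<in>VB m - {[]}. h v) = G (a0#a') w - h []"
  proof -
    have "[] \<in> VB m" by (simp add: VB_def)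
    then have "(\<Sum>v\<in>VB m. h v) = h [] + (\<Sum>v\<in>VB m - {[]}. h v)"
      by (simp add: sum.remove)
    then show ?thesis by (simp add: G_def h_def m_def)
  qed
  also have "(\<Sum>v\<in>VB m. h v) = G (a0#a') w" by (simp add: G_def h_def m_def)
  finally show ?thesis
    by (cases x) (auto simp: g_def h_def)
qed

definition rp :: "nat \<Rightarrow> letter list" where
  "rp p = replicate p X0 @ [X1]"

lemma rp_0: "rp 0 = [X1]" by (simp add: rp_def)
lemma rp_Suc: "rp (Suc q) = X0 # rp q" by (simp add: rp_def)
lemma length_rp[simp]: "length (rp p) = Suc p" by (simp add: rp_def)
lemma count_rp[simp]: "count_list (rp p) X1 = 1" by (simp add: rp_def)
lemma rp_inj: "rp p = rp q \<longleftrightarrow> p = q"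
  by (metis length_rp nat.inject)

definition F :: "letter list \<Rightarrow> int" where
  "F w = (\<Sum>p\<le>length w. G (rp p) w)"

lemma F_nil: "F [] = 0"
  by (simp add: F_def G_long)

lemma F_X1: "F (X1#w) = F w + (if w = [] \<or> last w = X1 then 1 else 0)"
proof -
  define m where "m = length w"
  have 1: "F (X1#w) = G (rp 0) (X1#w) + (\<Sum>q\<le>m. G (rp (Suc q)) (X1#w))"
    unfolding F_def m_def by (simp only: length_Cons sum.atMost_Suc_shift)
  have 2: "G (rp 0) (X1#w) = (if w = [] then 1 else 0) + (G [] w - (if w = [] then 1 else 0)) + G (rp 0) w"
    by (simp add: rp_0 G_cons)
  have 3: "(\<Sum>q\<le>m. G (rp (Suc q)) (X1#w)) = (\<Sum>q\<le>m. G (rp (Suc q)) w)"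
    by (rule sum.cong) (auto simp: rp_Suc G_cons)
  have 4: "G (rp 0) w + (\<Sum>q\<le>m. G (rp (Suc q)) w) = (\<Sum>p\<le>Suc m. G (rp p) w)"
    by (simp only: sum.atMost_Suc_shift)
  have 5: "(\<Sum>p\<le>Suc m. G (rp p) w) = F w"
    by (simp add: F_def m_def G_long)
  have "F (X1#w) = G [] w + F w" using 1 2 3 4 5 by linarith
  then show ?thesis by (simp add: G_nil)
qed

lemma F_X0: "F (X0#w) = 2 * F w - (\<Sum>p\<le>Suc (length w). if rp p = w then 1 else 0)"
proof -
  define m where "m = length w"
  define I where "I p = (if rp p = w then 1 else 0 :: int)" for p
  have "F (X0#w) = G (rp 0) (X0#w) + (\<Sum>q\<le>m. G (rp (Suc q)) (X0#w))"
    unfolding F_def m_def by (simp only: length_Cons sum.atMost_Suc_shift)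
  also have "G (rp 0) (X0#w) = G (rp 0) w - I 0"
    by (simp add: rp_0 G_cons I_def)
  also have "(\<Sum>q\<le>m. G (rp (Suc q)) (X0#w)) = (\<Sum>q\<le>m. G (rp q) w + (G (rp (Suc q)) w - I (Suc q)))"
    by (rule sum.cong) (auto simp: rp_Suc G_cons I_def)
  also have "G (rp 0) w - I 0 + (\<Sum>q\<le>m. G (rp q) w + (G (rp (Suc q)) w - I (Suc q)))
     = (\<Sum>q\<le>m. G (rp q) w) + (\<Sum>p\<le>Suc m. G (rp p) w - I p)"
    unfolding sum.atMost_Suc_shift[of _ m] sum.distrib sum_subtractf by linarith
  also have "(\<Sum>p\<le>Suc m. G (rp p) w - I p) = F w - (\<Sum>p\<le>Suc m. I p)"
    by (simp add: sum_subtractf F_def m_def G_long)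
  finally show ?thesis by (simp add: F_def m_def I_def)
qed

lemma F_rp: "F (rp q) = 1"
proof (induction q)
  case 0
  then show ?case by (simp add: rp_0 F_X1 F_nil)
next
  case (Suc q)
  have "(\<Sum>p\<le>Suc (length (rp q)). if rp p = rp q then 1 else 0 :: int) = 1"
    by (simp add: rp_inj sum.delta)
  then show ?case by (simp add: rp_Suc F_X0 Suc)
qed

lemma F_rep:
  assumes "count_list w X1 \<noteq> 1"
  shows "F (replicate q X0 @ w) = 2 ^ q * F w"
proof (induction q)
  case 0
  then show ?case by simp
next
  case (Suc q)
  have "(\<Sum>p\<le>Suc (length (replicate q X0 @ w)). if rp p = replicate q X0 @ w then 1 else 0 :: int) = 0"
    by (rule sum.neutral) (use assms in \<open>auto dest: arg_cong[where f="\<lambda>l. count_list l X1"]\<close>)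
  then show ?case by (simp add: F_X0 Suc)
qed


lemma rho_inv_Nil[simp]: "rho_inv [] = []" by (simp add: rho_inv_def)
lemma rho_inv_Cons[simp]: "rho_inv (s#c) = replicate (s-1) X0 @ X1 # rho_inv c"
  by (simp add: rho_inv_def)

lemma hword_Cons[simp]: "is_hword (s#c) \<longleftrightarrow> 1 \<le> s \<and> is_hword c"
  by (simp add: is_hword_def)
lemma hword_Nil[simp]: "is_hword []" by (simp add: is_hword_def)

lemma length_rho_inv: "is_hword c \<Longrightarrow> length (rho_inv c) = sum_list c"
  by (induction c) auto

lemma count_rho_inv: "count_list (rho_inv c) X1 = length c"
  by (induction c) auto

lemma rho_inv_empty[simp]: "rho_inv c = [] \<longleftrightarrow> c = []"
  by (cases c) auto

lemma last_rho_inv: "c \<noteq> [] \<Longrightarrow> rho_inv c \<noteq> [] \<and> last (rho_inv c) = X1"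
  by (induction c) auto

lemma rep_X1_inj: "replicate a X0 @ X1 # x = replicate b X0 @ X1 # y \<Longrightarrow> a = b \<and> x = y"
proof (induction a arbitrary: b)
  case 0
  then show ?case by (cases b) auto
next
  case (Suc a)
  then show ?case by (cases b) auto
qed

lemma rho_inv_inj: "is_hword c \<Longrightarrow> is_hword d \<Longrightarrow> rho_inv c = rho_inv d \<Longrightarrow> c = d"
proof (induction c arbitrary: d)
  case Nil
  then show ?case by (cases d) auto
next
  case (Cons s c)
  then show ?case
  proof (cases d)
    case Nil
    then show ?thesis using Cons by auto
  next
    case (Cons t d')
    have eq: "replicate (s-1) X0 @ X1 # rho_inv c = replicate (t-1) X0 @ X1 # rho_inv d'"
      using Cons.prems(3) \<open>d = t#d'\<close> by (simp only: rho_inv_Cons)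
    note r = rep_X1_inj[OF eq]
    have st: "s = t" using r Cons.prems(1,2) \<open>d = t#d'\<close> by (simp; arith)
    have "c = d'" using Cons.IH r Cons.prems(1,2) \<open>d = t#d'\<close> by simp
    then show ?thesis using st \<open>d = t#d'\<close> by simp
  qed
qed

lemma rho_inv_surj: "v = [] \<or> last v = X1 \<Longrightarrow> \<exists>c. is_hword c \<and> rho_inv c = v"
proof (induction v)
  case Nil
  then show ?case by (intro exI[of _ "[]"]) auto
next
  case (Cons x v)
  show ?case
  proof (cases x)
    case X0
    with Cons.prems have v: "v \<noteq> [] \<and> last v = X1" by (cases v) auto
    then obtain c where c: "is_hword c" "rho_inv c = v" using Cons.IH by auto
    then obtain s c' where sc: "c = s # c'" using v by (cases c) auto
    show ?thesis
      using c sc X0 by (intro exI[of _ "Suc s # c'"]) (cases s; auto)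
  next
    case X1
    show ?thesis
    proof (cases "v = []")
      case True
      then show ?thesis using X1 by (intro exI[of _ "[1]"]) auto
    next
      case False
      with Cons.prems have "last v = X1" by auto
      then obtain c where c: "is_hword c" "rho_inv c = v" using Cons.IH by auto
      then show ?thesis using X1 by (intro exI[of _ "1 # c"]) auto
    qed
  qed
qed

fun cc :: "nat list \<Rightarrow> int" where
  "cc [] = 1"
| "cc (t#ts) = 2^(t-1) * (1 + cc ts)"

lemma hword_len_le: "is_hword xs \<Longrightarrow> length xs \<le> sum_list xs"
  by (induction xs) auto

lemma hword_take: "is_hword xs \<Longrightarrow> is_hword (take j xs)"
  unfolding is_hword_def by (meson in_set_takeD)

lemma Ccoef_cons:
  assumes "is_hword (t#ts)"
  shows "Ccoef (t#ts) = 2^(t-1) * (1 + Ccoef ts)"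
proof -
  define L where "L = length ts"
  have t: "1 \<le> t" and h: "is_hword ts" using assms by auto
  have ex: "t + sum_list (take i ts) - Suc i = (t - 1) + (sum_list (take i ts) - i)" if "i \<le> L" for i
  proof -
    have "length (take i ts) \<le> sum_list (take i ts)" using hword_len_le hword_take h by blast
    then have "i \<le> sum_list (take i ts)" using that L_def by simp
    then show ?thesis using t by simp
  qed
  have "(\<Sum>j=1..length (t#ts). (2::int) ^ (sum_list (take j (t#ts)) - j))
      = (\<Sum>j=Suc 0..Suc L. (2::int) ^ (sum_list (take j (t#ts)) - j))"
    unfolding L_def by (simp only: length_Cons One_nat_def)
  also have "\<dots> = (\<Sum>i=0..L. (2::int) ^ (sum_list (take (Suc i) (t#ts)) - Suc i))"
    by (rule sum.shift_bounds_cl_Suc_ivl)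
  also have "\<dots> = (\<Sum>i=0..L. 2^(t-1) * (2::int) ^ (sum_list (take i ts) - i))"
    by (rule sum.cong) (auto simp: ex power_add)
  also have "\<dots> = 2^(t-1) * (\<Sum>i=0..L. (2::int) ^ (sum_list (take i ts) - i))"
    by (simp add: sum_distrib_left)
  also have "(\<Sum>i=0..L. (2::int) ^ (sum_list (take i ts) - i)) = 1 + (\<Sum>i=1..L. (2::int) ^ (sum_list (take i ts) - i))"
    by (simp add: sum.atLeast_Suc_atMost)
  finally have S: "(\<Sum>j=1..length (t#ts). (2::int) ^ (sum_list (take j (t#ts)) - j))
      = 2^(t-1) * (1 + (\<Sum>i=1..L. (2::int) ^ (sum_list (take i ts) - i)))" .
  have "sum_list (t#ts) - length (t#ts) = (t-1) + (sum_list ts - L)"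
    using ex[of L] by (simp add: L_def)
  then have T: "(2::int) ^ (sum_list (t#ts) - length (t#ts)) = 2^(t-1) * 2 ^ (sum_list ts - L)"
    by (simp add: power_add)
  show ?thesis unfolding Ccoef_def S T L_def by (simp add: algebra_simps)
qed

lemma Ccoef_cc: "is_hword ts \<Longrightarrow> Ccoef ts = cc ts"
proof (induction ts)
  case Nil
  then show ?case by (simp add: Ccoef_def)
next
  case (Cons t ts)
  then show ?case by (simp add: Ccoef_cons)
qed

lemma F_rho: "is_hword c \<Longrightarrow> c \<noteq> [] \<Longrightarrow> F (rho_inv c) = cc (butlast c)"
proof (induction c)
  case Nil
  then show ?case by simp
next
  case (Cons t c')
  show ?case
  proof (cases "c' = []")
    case True
    have "rho_inv [t] = rp (t-1)" by (simp add: rp_def)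
    then show ?thesis using True by (simp add: F_rp)
  next
    case False
    have cnt: "count_list (X1 # rho_inv c') X1 \<noteq> 1" using False by (simp add: count_rho_inv)
    have "F (rho_inv (t#c')) = 2^(t-1) * F (X1 # rho_inv c')"
      using F_rep[OF cnt] by simp
    also have "\<dots> = 2^(t-1) * (F (rho_inv c') + 1)"
      using last_rho_inv[OF False] by (simp add: F_X1)
    also have "\<dots> = cc (butlast (t#c'))" using Cons False by simp
    finally show ?thesis .
  qed
qed

lemma finite_comps: "finite (comps n k)"
proof -
  have "comps n k \<subseteq> {xs. set xs \<subseteq> {0..n} \<and> length xs = k}"
    unfolding comps_def using member_le_sum_list by fastforce
  moreover have "finite {xs. set xs \<subseteq> {0..n::nat} \<and> length xs = k}"
    by (rule finite_lists_length_eq) simp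
  ultimately show ?thesis by (rule finite_subset)
qed


lemma hshuffle_hword: "is_hword c \<Longrightarrow> hshuffle a b c = int (count_list (shuffle (rho_inv a) (rho_inv b)) (rho_inv c))"
  by (simp add: hshuffle_def shuffle_prod_def)

theorem theorem2p5:
  fixes k n :: nat
  assumes "2 \<le> k" and "k \<le> n"
  shows "(\<lambda>c. \<Sum>(r, ss)\<in>{(r, ss). 1 \<le> r \<and> ss \<in> comps (n - r) (k - 1) \<and> r \<le> n}.
              hshuffle [r] ss c)
       = (\<lambda>c. \<Sum>ts\<in>comps n k. Ccoef (take (k - 1) ts) * hbasis ts c)"
proof (rule ext)
  fix c
  define A where "A = {(r, ss). 1 \<le> r \<and> ss \<in> comps (n - r) (k - 1) \<and> r \<le> n}"
  have R: "(\<Sum>ts\<in>comps n k. Ccoef (take (k - 1) ts) * hbasis ts c)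
      = (if c \<in> comps n k then Ccoef (take (k - 1) c) else 0)"
  proof -
    have "(\<Sum>ts\<in>comps n k. Ccoef (take (k - 1) ts) * hbasis ts c)
       = (\<Sum>ts\<in>comps n k. if c = ts then Ccoef (take (k - 1) ts) else 0)"
      by (rule sum.cong) (auto simp: hbasis_def)
    also have "\<dots> = (if c \<in> comps n k then Ccoef (take (k - 1) c) else 0)"
      using finite_comps by (simp add: sum.delta)
    finally show ?thesis .
  qed
  have compsD: "ss \<in> comps m j \<Longrightarrow> is_hword ss \<and> length ss = j \<and> sum_list ss = m" for ss m j
    by (auto simp: comps_def is_hword_def)
  show "(\<Sum>(r, ss)\<in>A. hshuffle [r] ss c) = (\<Sum>ts\<in>comps n k. Ccoef (take (k - 1) ts) * hbasis ts c)"
  proof (cases "is_hword c")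
    case False
    then have "c \<notin> comps n k" using compsD by blast
    moreover have "(\<Sum>(r, ss)\<in>A. hshuffle [r] ss c) = 0"
      using False by (intro sum.neutral) (auto simp: hshuffle_def)
    ultimately show ?thesis using R by simp
  next
    case hw: True
    define w where "w = rho_inv c"
    have lw: "length w = sum_list c" using hw by (simp add: w_def length_rho_inv)
    have cw: "count_list w X1 = length c" by (simp add: w_def count_rho_inv)
    have rpr: "rho_inv [r] = rp (r - 1)" for r by (simp add: rp_def)
    have L: "(\<Sum>(r, ss)\<in>A. hshuffle [r] ss c) = (\<Sum>(r, ss)\<in>A. int (count_list (shuffle (rp (r - 1)) (rho_inv ss)) w))"
      by (rule sum.cong) (auto simp: hshuffle_hword[OF hw] w_def rp_def)
    show ?thesis
    proof (cases "c \<in> comps n k")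
      case False
      have "(\<Sum>(r, ss)\<in>A. int (count_list (shuffle (rp (r - 1)) (rho_inv ss)) w)) = 0"
      proof (rule sum.neutral, safe)
        fix r ss assume "(r, ss) \<in> A"
        then have r: "1 \<le> r" "r \<le> n" and ss: "is_hword ss" "length ss = k - 1" "sum_list ss = n - r"
          using compsD unfolding A_def by auto
        have "length w \<noteq> length (rp (r - 1)) + length (rho_inv ss) \<or>
              count_list w X1 \<noteq> count_list (rp (r - 1)) X1 + count_list (rho_inv ss) X1"
        proof (rule ccontr)
          assume "\<not> ?thesis"
          then have "sum_list c = n" "length c = k"
            using r ss lw cw assms by (auto simp: length_rho_inv count_rho_inv)
          then show False using False hw by (auto simp: comps_def is_hword_def)
        qed
        then show "int (count_list (shuffle (rp (r - 1)) (rho_inv ss)) w) = 0"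
          by (simp only: count_shuffle_zero of_nat_0)
      qed
      then show ?thesis using L R False by simp
    next
      case True
      then have cn: "length c = k" "sum_list c = n" by (auto simp: comps_def)
      define h where "h = (\<lambda>(r::nat, ss::nat list). (r - 1, rho_inv ss))"
      define f where "f = (\<lambda>(p, v). int (count_list (shuffle (rp p) v) w))"
      define B where "B = {..n} \<times> VB n"
      have finA: "finite B" by (simp add: B_def)
      have "(\<Sum>(r, ss)\<in>A. int (count_list (shuffle (rp (r - 1)) (rho_inv ss)) w)) = sum (f \<circ> h) A"
        by (rule sum.cong) (auto simp: f_def h_def)
      also have "\<dots> = sum f (h ` A)"
      proof -
        have "inj_on h A"
        proof (rule inj_onI)
          fix x y assume x: "x \<in> A" and y: "y \<in> A" and hxy: "h x = h y"
          obtain r ss where xe: "x = (r, ss)" by fastforce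
          obtain r' ss' where ye: "y = (r', ss')" by fastforce
          have r: "1 \<le> r" "1 \<le> r'" and hs: "is_hword ss" "is_hword ss'"
            using x y compsD unfolding xe ye A_def by auto
          have "r - 1 = r' - 1" "rho_inv ss = rho_inv ss'" using hxy unfolding xe ye h_def by auto
          then have "r = r'" "ss = ss'" using r hs rho_inv_inj by auto
          then show "x = y" using xe ye by simp
        qed
        then show ?thesis by (simp add: sum.reindex)
      qed
      also have "\<dots> = sum f B"
      proof (rule sum.mono_neutral_left[OF finA])
        show "h ` A \<subseteq> B"
        proof
          fix y assume "y \<in> h ` A"
          then obtain r ss where rs: "(r, ss) \<in> A" and ye: "y = (r - 1, rho_inv ss)"
            unfolding h_def by auto
          then have r: "1 \<le> r" "r \<le> n" and ss: "is_hword ss" "length ss = k - 1" "sum_list ss = n - r"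
            using compsD unfolding A_def by auto
          then have "ss \<noteq> []" using assms by auto
          then have "rho_inv ss \<in> VB n"
            using ss last_rho_inv[of ss] r by (auto simp: VB_def length_rho_inv)
          then show "y \<in> B" using ye r by (simp add: B_def)
        qed
        show "\<forall>x\<in>B - h ` A. f x = 0"
        proof (clarsimp simp: B_def)
          fix p v assume p: "p \<le> n" and v: "v \<in> VB n" and nA: "(p, v) \<notin> h ` A"
          show "f (p, v) = 0"
          proof (rule ccontr)
            assume "f (p, v) \<noteq> 0"
            then have "count_list (shuffle (rp p) v) w \<noteq> 0" by (simp add: f_def)
            then have e: "length w = Suc p + length v" "count_list w X1 = 1 + count_list v X1"
              using count_shuffle_zero[of w "rp p" v X1] by auto
            from v have "v = [] \<or> last v = X1" by (auto simp: VB_def)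
            then obtain ss where ss: "is_hword ss" "rho_inv ss = v" using rho_inv_surj by blast
            have "length ss = k - 1" using e cw cn ss count_rho_inv[of ss] by simp
            moreover have "sum_list ss = n - Suc p" using e lw cn ss length_rho_inv[of ss] by simp
            moreover have "Suc p \<le> n" using e lw cn by simp
            ultimately have "(Suc p, ss) \<in> A"
              using ss by (auto simp: A_def comps_def is_hword_def)
            moreover have "h (Suc p, ss) = (p, v)" using ss by (simp add: h_def)
            ultimately show False using nA by (metis image_eqI)
          qed
        qed
      qed
      also have "\<dots> = F w"
        unfolding B_def F_def G_def f_def lw cn
        by (simp add: sum.cartesian_product)
      also have "\<dots> = cc (butlast c)"
      proof -
        have "c \<noteq> []" using cn assms by auto
        then show ?thesis using F_rho[OF hw] by (simp add: w_def)
      qed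
      also have "\<dots> = Ccoef (take (k - 1) c)"
        using hw cn by (simp add: Ccoef_cc butlast_conv_take hword_take)
      finally show ?thesis using L R True by simp
    qed
  qed
qed

end
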